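(* Let $A\in\mathbb{C}^{m\times n}$ and $X\in\mathbb{C}^{n\times m}$. Then the following are equivalent: (1) $X\in A\{1,4^{\mathfrak{m}}\}$; (2) $XAA^{\sim}=A^{\sim}$; (3) $XA=P_{\mathcal{R}(A^{\sim}),\mathcal{N}(A)}$. In this case, $$A\{1,4^{\mathfrak{m}}\}=\left\{A^{(1,4^{\mathfrak{m}})}+Z(I_m-AA^{(1,4^{\mathfrak{m}})}) : Z\in\mathbb{C}^{n\times m}\right\},$$ where $A^{(1,4^{\mathfrak{m}})}\in A\{1,4^{\mathfrak{m}}\}$ is fixed but arbitrary.
   Context: For a positive integer $k$, the Minkowski metric matrix of order $k$ is $G_k=\mathrm{diag}(1,-I_{k-1})$ (with $G_1=(1)$). For $A\in\mathbb{C}^{m\times n}$, the Minkowski adjoint is $A^{\sim}=G_nA^*G_m$, where $A^*$ is the conjugate transpose. For $A\in\mathbb{C}^{m\times n}$ and $X\in\mathbb{C}^{n\times m}$ consider the equations $(1)\ AXA=A$, $(2)\ XAX=X$, $(3^{\mathfrak{m}})\ (AX)^{\sim}=AX$, $(4^{\mathfrak{m}})\ (XA)^{\sim}=XA$; $A\{i,\dots,k\}$ denotes the set of all $X$ satisfying the listed equations. $\mathcal{R}(\cdot)$ and $\mathcal{N}(\cdot)$ denote range and null space. For subspaces $\mathcal{S},\mathcal{T}\subseteq\mathbb{C}^n$ with $\mathcal{S}\oplus\mathcal{T}=\mathbb{C}^n$, $P_{\mathcal{S},\mathcal{T}}$ denotes the projector onto $\mathcal{S}$ along $\mathcal{T}$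 (statement (3) includes that this direct sum holds). *)

theory Defs
  imports "Jordan_Normal_Form.Matrix"
begin

definition minkowski_metric :: "nat \<Rightarrow> complex mat" where
  "minkowski_metric k = mat k k (\<lambda>(i,j). if i = j then (if i = 0 then 1 else -1) else 0)"

definition conj_transpose :: "complex mat \<Rightarrow> complex mat" where
  "conj_transpose A = transpose_mat (map_mat cnj A)"

definition mink_adj :: "complex mat \<Rightarrow> complex mat" where
  "mink_adj A = minkowski_metric (dim_col A) * conj_transpose A * minkowski_metric (dim_row A)"

definition mink_g14 :: "complex mat \<Rightarrow> complex mat set" where
  "mink_g14 A = {X \<in> carrier_mat (dim_col A) (dim_row A).
                   A * X * A = A \<and> mink_adj (X * A) = X * A}"

definition mat_range :: "complex mat \<Rightarrow> complex vec set" where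
  "mat_range A = {A *\<^sub>v x | x. x \<in> carrier_vec (dim_col A)}"

definition mat_null :: "complex mat \<Rightarrow> complex vec set" where
  "mat_null A = {x \<in> carrier_vec (dim_col A). A *\<^sub>v x = 0\<^sub>v (dim_row A)}"

definition direct_sum_full :: "nat \<Rightarrow> complex vec set \<Rightarrow> complex vec set \<Rightarrow> bool" where
  "direct_sum_full n S T \<longleftrightarrow> S \<subseteq> carrier_vec n \<and> T \<subseteq> carrier_vec n \<and>
     (\<forall>x \<in> carrier_vec n. \<exists>!p. fst p \<in> S \<and> snd p \<in> T \<and> x = fst p + snd p)"

definition is_projector_onto_along :: "nat \<Rightarrow> complex mat \<Rightarrow> complex vec set \<Rightarrow> complex vec set \<Rightarrow> bool" where
  "is_projector_onto_along n P S T \<longleftrightarrow> direct_sum_full n S T \<and> P \<in> carrier_mat n n \<and>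
     (\<forall>s \<in> S. P *\<^sub>v s = s) \<and> (\<forall>t \<in> T. P *\<^sub>v t = 0\<^sub>v n)"

end

theory Submission
  imports Defs
begin

lemma G_carrier[simp]: "minkowski_metric k \<in> carrier_mat k k"
  unfolding minkowski_metric_def by auto

lemma G_dims[simp]: "dim_row (minkowski_metric k) = k" "dim_col (minkowski_metric k) = k"
  unfolding minkowski_metric_def by auto

lemma assoc_dim: "dim_col (A::'a::semiring_0 mat) = dim_row B \<Longrightarrow> dim_col B = dim_row C \<Longrightarrow> (A*B)*C = A*(B*C)"
  by (rule assoc_mult_mat[of A "dim_row A" "dim_col A" B "dim_col B" C "dim_col C"]) auto

lemma G_sq: "minkowski_metric k * minkowski_metric k = 1\<^sub>m k"
proof (rule eq_matI)
  fix i j assume "i < dim_row (1\<^sub>m k :: complex mat)" "j < dim_col (1\<^sub>m k :: complex mat)"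
  then have ij: "i < k" "j < k" by auto
  have "(minkowski_metric k * minkowski_metric k) $$ (i,j)
     = (\<Sum>l<k. (if i = l then (if i = 0 then 1 else -1) else 0) * (if l = j then (if l = 0 then 1 else -1) else 0))"
    using ij by (simp add: minkowski_metric_def scalar_prod_def atLeast0LessThan)
  also have "\<dots> = (\<Sum>l\<in>{i}. (if i = l then (if i = 0 then 1 else -1) else 0) * (if l = j then (if l = 0 then 1 else -1) else 0))"
    using ij by (intro sum.mono_neutral_right) auto
  also have "\<dots> = 1\<^sub>m k $$ (i,j)" using ij by auto
  finally show "(minkowski_metric k * minkowski_metric k) $$ (i,j) = 1\<^sub>m k $$ (i,j)" .
qed (auto simp: minkowski_metric_def)

lemma G_sq2: "dim_row B = k \<Longrightarrow> minkowski_metric k * (minkowski_metric k * B) = B"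
  using assoc_dim[of "minkowski_metric k" "minkowski_metric k" B] G_sq[of k] by simp

lemma ct_dims[simp]: "dim_row (conj_transpose A) = dim_col A" "dim_col (conj_transpose A) = dim_row A"
  unfolding conj_transpose_def by auto

lemma G_ct: "conj_transpose (minkowski_metric k) = minkowski_metric k"
  unfolding conj_transpose_def minkowski_metric_def by (rule eq_matI) auto

lemma ct_carrier[simp]: "A \<in> carrier_mat m n \<Longrightarrow> conj_transpose A \<in> carrier_mat n m"
  unfolding conj_transpose_def by auto

lemma ct_ct[simp]: "conj_transpose (conj_transpose A) = A"
  unfolding conj_transpose_def by (rule eq_matI) auto

lemma ct_mult: assumes "B \<in> carrier_mat m k" "C \<in> carrier_mat k n"
  shows "conj_transpose (B * C) = conj_transpose C * conj_transpose B"
proof (rule eq_matI)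
  fix i j assume ij: "i < dim_row (conj_transpose C * conj_transpose B)" "j < dim_col (conj_transpose C * conj_transpose B)"
  have d: "dim_row B = m" "dim_col B = k" "dim_row C = k" "dim_col C = n" using assms by auto
  have i: "i < n" and j: "j < m" using ij d unfolding conj_transpose_def by auto
  have "conj_transpose (B * C) $$ (i,j) = cnj (\<Sum>l<k. B $$ (j,l) * C $$ (l,i))"
    using i j d by (simp add: conj_transpose_def scalar_prod_def atLeast0LessThan)
  also have "\<dots> = (\<Sum>l<k. cnj (C $$ (l,i)) * cnj (B $$ (j,l)))"
    by (simp add: cnj_sum mult.commute)
  also have "\<dots> = (conj_transpose C * conj_transpose B) $$ (i,j)"
    using i j d by (simp add: conj_transpose_def scalar_prod_def atLeast0LessThan)
  finally show "conj_transpose (B * C) $$ (i,j) = (conj_transpose C * conj_transpose B) $$ (i,j)" .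
qed (use assms in \<open>auto simp: conj_transpose_def\<close>)

lemma adj_carrier[simp]: assumes A: "A \<in> carrier_mat m n" shows "mink_adj A \<in> carrier_mat n m"
proof -
  have d: "dim_row A = m" "dim_col A = n" using A by auto
  show ?thesis unfolding mink_adj_def d
    by (rule mult_carrier_mat[OF mult_carrier_mat[OF G_carrier ct_carrier[OF A]] G_carrier])
qed

lemma adj_dims[simp]: "dim_row (mink_adj A) = dim_col A" "dim_col (mink_adj A) = dim_row A"
  unfolding mink_adj_def by simp_all

lemma adj_eq: "A \<in> carrier_mat m n \<Longrightarrow> mink_adj A = minkowski_metric n * conj_transpose A * minkowski_metric m"
  unfolding mink_adj_def by auto

lemma adj_adj: assumes A: "A \<in> carrier_mat m n" shows "mink_adj (mink_adj A) = A"
proof -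
  let ?G = minkowski_metric
  have c1: "conj_transpose A \<in> carrier_mat n m" using A by simp
  have c2: "?G n * conj_transpose A \<in> carrier_mat n m" using mult_carrier_mat[OF G_carrier c1] .
  have "conj_transpose (mink_adj A) = conj_transpose (?G n * conj_transpose A * ?G m)"
    using A by (simp add: adj_eq)
  also have "\<dots> = ?G m * conj_transpose (?G n * conj_transpose A)"
    using ct_mult[OF c2 G_carrier] G_ct by simp
  also have "\<dots> = ?G m * (A * ?G n)"
    using ct_mult[OF G_carrier c1] G_ct by simp
  finally have ct: "conj_transpose (mink_adj A) = ?G m * (A * ?G n)" .
  have "mink_adj (mink_adj A) = ?G m * (?G m * (A * ?G n)) * ?G n"
    using adj_eq[OF adj_carrier[OF A]] ct by simp
  also have "\<dots> = (?G m * ?G m) * (A * (?G n * ?G n))"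
    using A by (simp add: assoc_dim carrier_matD)
  also have "\<dots> = A" using A by (simp add: G_sq)
  finally show ?thesis .
qed


lemma adj_mult: assumes B: "B \<in> carrier_mat m k" and C: "C \<in> carrier_mat k n"
  shows "mink_adj (B * C) = mink_adj C * mink_adj B"
proof -
  let ?G = minkowski_metric
  have "mink_adj (B * C) = ?G n * (conj_transpose C * conj_transpose B) * ?G m"
    using B C by (simp add: adj_eq[of _ m n] ct_mult)
  also have "\<dots> = ?G n * conj_transpose C * ?G k * (?G k * conj_transpose B * ?G m)"
    using B C by (simp add: G_sq2 assoc_dim carrier_matD)
  also have "\<dots> = mink_adj C * mink_adj B"
    using B C by (simp add: adj_eq[of C k n] adj_eq[of B m k] assoc_dim carrier_matD)
  finally show ?thesis .
qed

lemma g14_iff: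
  assumes A: "A \<in> carrier_mat m n" and X: "X \<in> carrier_mat n m"
  shows "X \<in> mink_g14 A \<longleftrightarrow> X * A * mink_adj A = mink_adj A"
proof -
  define Ad where "Ad = mink_adj A"
  define Xd where "Xd = mink_adj X"
  have Ad: "Ad \<in> carrier_mat n m" using A Ad_def by simp
  have Xd: "Xd \<in> carrier_mat m n" using X Xd_def by simp
  have adjAd: "mink_adj Ad = A" using adj_adj[OF A] Ad_def by simp
  have adjXA: "mink_adj (X*A) = Ad*Xd" using adj_mult[OF X A] Ad_def Xd_def by simp
  have adjAX: "mink_adj (A*X) = Xd*Ad" using adj_mult[OF A X] Ad_def Xd_def by simp
  have adjAXA: "mink_adj (A*X*A) = Ad*(Xd*Ad)"
    using adj_mult[OF mult_carrier_mat[OF A X] A] adjAX Ad_def by simp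
  have mem: "X \<in> mink_g14 A \<longleftrightarrow> A * X * A = A \<and> mink_adj (X * A) = X * A"
    using A X unfolding mink_g14_def by auto
  show ?thesis unfolding mem Ad_def[symmetric]
  proof
    assume h: "A * X * A = A \<and> mink_adj (X * A) = X * A"
    have "X * A * Ad = Ad*Xd*Ad" using h adjXA by simp
    also have "\<dots> = Ad*(Xd*Ad)" using Ad Xd by (simp add: assoc_dim carrier_matD)
    also have "\<dots> = Ad" using adjAXA h Ad_def by simp
    finally show "X * A * Ad = Ad" .
  next
    assume h: "X * A * Ad = Ad"
    have "mink_adj (X*A*Ad) = mink_adj Ad * mink_adj (X*A)"
      using adj_mult[OF mult_carrier_mat[OF X A] Ad] .
    then have eqA: "A = A*(Ad*Xd)" using h adjAd adjXA by simp
    have "A*X*A = A*X*(A*(Ad*Xd))" using arg_cong[where f="\<lambda>B. A*X*B", OF eqA] .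
    also have "\<dots> = A*((X*A*Ad)*Xd)" using A X Ad Xd by (simp add: assoc_dim carrier_matD)
    also have "\<dots> = A" using h eqA by simp
    finally have 1: "A*X*A = A" .
    have "X*A = X*(A*(Ad*Xd))" using arg_cong[where f="\<lambda>B. X*B", OF eqA] .
    also have "\<dots> = (X*A*Ad)*Xd" using A X Ad Xd by (simp add: assoc_dim carrier_matD)
    also have "\<dots> = mink_adj (X*A)" using h adjXA by simp
    finally show "A * X * A = A \<and> mink_adj (X * A) = X * A" using 1 by simp
  qed
qed

lemma mat_unit: assumes "(B::complex mat) \<in> carrier_mat nr nc" "j < nc"
  shows "B *\<^sub>v unit_vec nc j = col B j"
proof -
  have d: "dim_row B = nr" "dim_col B = nc" using assms by auto
  show ?thesis using assms d by (intro eq_vecI) auto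
qed

lemma g14_proj:
  assumes A: "A \<in> carrier_mat m n" and X: "X \<in> carrier_mat n m"
  shows "X * A * mink_adj A = mink_adj A \<longleftrightarrow>
         is_projector_onto_along n (X * A) (mat_range (mink_adj A)) (mat_null A)"
proof -
  define Ad where "Ad = mink_adj A"
  have Ad: "Ad \<in> carrier_mat n m" using A Ad_def by simp
  have P: "X * A \<in> carrier_mat n n" using A X by simp
  have R: "mat_range Ad = {Ad *\<^sub>v y | y. y \<in> carrier_vec m}" using Ad unfolding mat_range_def by auto
  have N: "mat_null A = {x \<in> carrier_vec n. A *\<^sub>v x = 0\<^sub>v m}" using A unfolding mat_null_def by auto
  show ?thesis unfolding Ad_def[symmetric]
  proof
    assume h: "X * A * Ad = Ad"
    then have g: "X \<in> mink_g14 A" using g14_iff[OF A X] Ad_def by simp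
    then have AXA: "A * X * A = A" and sa: "mink_adj (X*A) = X*A" unfolding mink_g14_def by auto
    have "X * A = mink_adj (X * A)" using sa by (rule sym)
    also have "\<dots> = mink_adj A * mink_adj X" by (rule adj_mult[OF X A])
    finally have XA: "X * A = Ad * mink_adj X" unfolding Ad_def .
    have fixS: "(X*A) *\<^sub>v s = s" if s_in: "s \<in> mat_range Ad" for s
    proof -
      obtain y where y: "y \<in> carrier_vec m" "s = Ad *\<^sub>v y" using s_in unfolding R by blast
      have "(X*A) *\<^sub>v (Ad *\<^sub>v y) = (X*A*Ad) *\<^sub>v y" using P Ad y by simp
      then show ?thesis using h y by simp
    qed
    have killT: "(X*A) *\<^sub>v t = 0\<^sub>v n" if "t \<in> mat_null A" for t
    proof -
      have t: "t \<in> carrier_vec n" "A *\<^sub>v t = 0\<^sub>v m" using that N by auto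
      have "(X*A) *\<^sub>v t = X *\<^sub>v (A *\<^sub>v t)" using X A t by simp
      also have "\<dots> = 0\<^sub>v n" using t X by (intro eq_vecI) auto
      finally show ?thesis .
    qed
    have Rc: "mat_range Ad \<subseteq> carrier_vec n" using R Ad by auto
    have Nc: "mat_null A \<subseteq> carrier_vec n" using N by auto
    have ds: "direct_sum_full n (mat_range Ad) (mat_null A)"
      unfolding direct_sum_full_def
    proof (intro conjI Rc Nc ballI)
      fix x :: "complex vec" assume x: "x \<in> carrier_vec n"
      let ?s = "(X*A) *\<^sub>v x"
      have sc: "?s \<in> carrier_vec n" using P x by simp
      have s_in: "?s \<in> mat_range Ad"
      proof -
        have "?s = Ad *\<^sub>v (mink_adj X *\<^sub>v x)" using XA assoc_mult_mat_vec[OF Ad adj_carrier[OF X] x] by simp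
        moreover have "mink_adj X *\<^sub>v x \<in> carrier_vec m" using mult_mat_vec_carrier[OF adj_carrier[OF X] x] .
        ultimately show ?thesis using R by blast
      qed
      have t_in: "x - ?s \<in> mat_null A"
      proof -
        have "A *\<^sub>v (x - ?s) = A *\<^sub>v x - A *\<^sub>v ?s"
          using A x sc by (simp add: mult_minus_distrib_mat_vec)
        also have "A *\<^sub>v ?s = (A * X * A) *\<^sub>v x"
          by (simp only: assoc_mult_mat[OF A X A] assoc_mult_mat_vec[OF A mult_carrier_mat[OF X A] x])
        finally have "A *\<^sub>v (x - ?s) = A *\<^sub>v x - A *\<^sub>v x" using AXA by simp
        also have "\<dots> = 0\<^sub>v m" using A x by simp
        finally show ?thesis using N x sc by auto
      qed
      show "\<exists>!p. fst p \<in> mat_range Ad \<and> snd p \<in> mat_null A \<and> x = fst p + snd p"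
      proof (rule ex1I[where a="(?s, x - ?s)"])
        show "fst (?s, x - ?s) \<in> mat_range Ad \<and> snd (?s, x - ?s) \<in> mat_null A \<and> x = fst (?s, x - ?s) + snd (?s, x - ?s)"
        proof -
          have "x = ?s + (x - ?s)" using x sc P by (intro eq_vecI) (auto simp del: mult_mat_vec_carrier)
          then show ?thesis using s_in t_in by simp
        qed
      next
        fix p :: "complex vec \<times> complex vec"
        assume p: "fst p \<in> mat_range Ad \<and> snd p \<in> mat_null A \<and> x = fst p + snd p"
        have pc: "fst p \<in> carrier_vec n" "snd p \<in> carrier_vec n" using p Rc Nc by auto
        have "?s = (X*A) *\<^sub>v fst p + (X*A) *\<^sub>v snd p"
          using mult_add_distrib_mat_vec[OF P pc] p by simp
        also have "\<dots> = fst p + 0\<^sub>v n" using fixS[of "fst p"] killT[of "snd p"] p by simp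
        also have "\<dots> = fst p" using pc by simp
        finally have s: "?s = fst p" .
        have "snd p = x - fst p" using p pc by (intro eq_vecI) auto
        then show "p = (?s, x - ?s)" using s by (simp add: prod_eq_iff)
      qed
    qed
    show "is_projector_onto_along n (X * A) (mat_range Ad) (mat_null A)"
      unfolding is_projector_onto_along_def by (intro conjI ds P ballI fixS killT)
  next
    assume h: "is_projector_onto_along n (X * A) (mat_range Ad) (mat_null A)"
    have fixS: "(X*A) *\<^sub>v s = s" if "s \<in> mat_range Ad" for s
      using h that unfolding is_projector_onto_along_def by blast
    show "X * A * Ad = Ad"
    proof (rule eq_matI)
      fix i j assume ij: "i < dim_row Ad" "j < dim_col Ad"
      have jm: "j < m" using ij Ad by simp
      have "col Ad j = Ad *\<^sub>v unit_vec m j" using mat_unit[OF Ad jm] by simp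
      then have col_in: "col Ad j \<in> mat_range Ad" unfolding R using unit_vec_carrier[of m j] by blast
      have "(X * A * Ad) $$ (i,j) = ((X*A) *\<^sub>v col Ad j) $ i"
      proof -
        have d: "dim_row (X*A) = n" "dim_col Ad = m" "dim_row Ad = n" using Ad P by auto
        show ?thesis using ij d by (simp add: index_mult_mat index_mult_mat_vec)
      qed
      also have "\<dots> = col Ad j $ i" using fixS col_in by simp
      also have "\<dots> = Ad $$ (i,j)" using ij by simp
      finally show "(X * A * Ad) $$ (i,j) = Ad $$ (i,j)" .
    qed (use Ad P in auto)
  qed
qed

lemma g14_WA:
  assumes A: "A \<in> carrier_mat m n" and Y: "Y \<in> mink_g14 A" and W: "W \<in> mink_g14 A"
  shows "W * A = Y * A"
proof -
  have Yc: "Y \<in> carrier_mat n m" and Wc: "W \<in> carrier_mat n m"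
    using Y W A unfolding mink_g14_def by auto
  have AWA: "A * W * A = A" and sW: "mink_adj (W*A) = W*A" using W unfolding mink_g14_def by auto
  have hY: "Y * A * mink_adj A = mink_adj A" using g14_iff[OF A Yc] Y by simp
  have Ad: "mink_adj A \<in> carrier_mat n m" using A by simp
  have Wd: "mink_adj W \<in> carrier_mat m n" using Wc by simp
  have WA: "W * A = mink_adj A * mink_adj W"
  proof -
    have "W * A = mink_adj (W * A)" using sW by (rule sym)
    also have "\<dots> = mink_adj A * mink_adj W" by (rule adj_mult[OF Wc A])
    finally show ?thesis .
  qed
  have "Y * A * (W * A) = Y * A * (mink_adj A * mink_adj W)" using WA by simp
  also have "\<dots> = (Y * A * mink_adj A) * mink_adj W"
    using Yc A Wc by (simp add: assoc_dim carrier_matD)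
  also have "\<dots> = W * A" using hY WA by simp
  finally have 1: "Y * A * (W * A) = W * A" .
  have "Y * A * (W * A) = Y * (A * W * A)"
    using Yc A Wc by (simp add: assoc_dim carrier_matD)
  also have "\<dots> = Y * A" using AWA by simp
  finally show ?thesis using 1 by simp
qed

lemma g14_param:
  assumes A: "A \<in> carrier_mat m n" and Y: "Y \<in> mink_g14 A"
  shows "mink_g14 A = {Y + Z * (1\<^sub>m m - A * Y) | Z. Z \<in> carrier_mat n m}"
proof
  have Yc: "Y \<in> carrier_mat n m" using Y A unfolding mink_g14_def by auto
  have AYA: "A * Y * A = A" and sY: "mink_adj (Y*A) = Y*A" using Y unfolding mink_g14_def by auto
  have AY: "A * Y \<in> carrier_mat m m" using A Yc by simp
  have YA: "Y * A \<in> carrier_mat n n" using A Yc by simp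
  have IAY: "1\<^sub>m m - A * Y \<in> carrier_mat m m" using AY by (simp add: minus_carrier_mat)
  show "mink_g14 A \<subseteq> {Y + Z * (1\<^sub>m m - A * Y) | Z. Z \<in> carrier_mat n m}"
  proof
    fix W assume W: "W \<in> mink_g14 A"
    have Wc: "W \<in> carrier_mat n m" using W A unfolding mink_g14_def by auto
    have WA: "W * A = Y * A" by (rule g14_WA[OF A Y W])
    have WY: "W - Y \<in> carrier_mat n m" using Yc by (simp add: minus_carrier_mat)
    have "(W - Y) * (1\<^sub>m m - A * Y) = (W - Y) * 1\<^sub>m m - (W - Y) * (A * Y)"
      by (rule mult_minus_distrib_mat[OF WY one_carrier_mat AY])
    also have "(W - Y) * (A * Y) = W * (A * Y) - Y * (A * Y)"
      by (rule minus_mult_distrib_mat[OF Wc Yc AY])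
    also have "W * (A * Y) = Y * (A * Y)"
    proof -
      have "W * (A * Y) = (W * A) * Y" using Wc A Yc by (simp add: assoc_dim carrier_matD)
      also have "\<dots> = (Y * A) * Y" using WA by simp
      also have "\<dots> = Y * (A * Y)" using Yc A by (simp add: assoc_dim carrier_matD)
      finally show ?thesis .
    qed
    also have "(W - Y) * 1\<^sub>m m = W - Y" using right_mult_one_mat[OF WY] .
    finally have eq: "(W - Y) * (1\<^sub>m m - A * Y) = (W - Y) - (Y * (A * Y) - Y * (A * Y))" .
    have YAY: "Y * (A * Y) \<in> carrier_mat n m" using Yc AY by simp
    have "W = Y + ((W - Y) - (Y * (A * Y) - Y * (A * Y)))"
      using Wc Yc YAY by (intro eq_matI) auto
    then have "W = Y + (W - Y) * (1\<^sub>m m - A * Y)" using eq by simp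
    then show "W \<in> {Y + Z * (1\<^sub>m m - A * Y) | Z. Z \<in> carrier_mat n m}" using WY by blast
  qed
  show "{Y + Z * (1\<^sub>m m - A * Y) | Z. Z \<in> carrier_mat n m} \<subseteq> mink_g14 A"
  proof
    fix W assume "W \<in> {Y + Z * (1\<^sub>m m - A * Y) | Z. Z \<in> carrier_mat n m}"
    then obtain Z where Z: "Z \<in> carrier_mat n m" and Wdef: "W = Y + Z * (1\<^sub>m m - A * Y)" by blast
    have ZI: "Z * (1\<^sub>m m - A * Y) \<in> carrier_mat n m" using Z IAY by simp
    have Wc: "W \<in> carrier_mat n m" using Wdef Yc ZI by simp
    have "(1\<^sub>m m - A * Y) * A = 1\<^sub>m m * A - A * Y * A"
      by (rule minus_mult_distrib_mat[OF one_carrier_mat AY A])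
    also have "\<dots> = A - A" using A AYA by simp
    also have "\<dots> = 0\<^sub>m m n" using A by simp
    finally have IA: "(1\<^sub>m m - A * Y) * A = 0\<^sub>m m n" .
    have "W * A = Y * A + Z * (1\<^sub>m m - A * Y) * A"
      unfolding Wdef by (rule add_mult_distrib_mat[OF Yc ZI A])
    also have "Z * (1\<^sub>m m - A * Y) * A = Z * ((1\<^sub>m m - A * Y) * A)"
      by (rule assoc_mult_mat[OF Z IAY A])
    also have "\<dots> = 0\<^sub>m n n" using IA Z by simp
    also have "Y * A + 0\<^sub>m n n = Y * A" using YA by simp
    finally have WA: "W * A = Y * A" .
    have "A * W * A = A * (W * A)" using A Wc by (simp add: assoc_dim carrier_matD)
    also have "\<dots> = A * (Y * A)" using WA by simp
    also have "\<dots> = A * Y * A" using A Yc by (simp add: assoc_dim carrier_matD)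
    also have "\<dots> = A" by (rule AYA)
    finally have 1: "A * W * A = A" .
    have 2: "mink_adj (W * A) = W * A" using WA sY by simp
    show "W \<in> mink_g14 A" using Wc A 1 2 unfolding mink_g14_def by auto
  qed
qed

theorem theorem4p6:
  fixes A X :: "complex mat" and m n :: nat
  assumes "m > 0" and "n > 0"
    and "A \<in> carrier_mat m n" and "X \<in> carrier_mat n m"
  shows "(X \<in> mink_g14 A \<longleftrightarrow> X * A * mink_adj A = mink_adj A)
    \<and> (X * A * mink_adj A = mink_adj A \<longleftrightarrow>
         is_projector_onto_along n (X * A) (mat_range (mink_adj A)) (mat_null A))
    \<and> (X \<in> mink_g14 A \<longrightarrow>
         (\<forall>Y \<in> mink_g14 A.
            mink_g14 A = {Y + Z * (1\<^sub>m m - A * Y) | Z. Z \<in> carrier_mat n m}))"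
  using g14_iff[OF assms(3,4)] g14_proj[OF assms(3,4)] g14_param[OF assms(3)] by blast

end
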